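(* Let $a$ be a positive integer, $\beta\in[0,1]$, and $r:=(\phi^{\beta/a}-1)/(\phi^{1/a}-1)$. For an integer $n>1$ write $\mathfrak F^{-1}(n^a)=m+p$ with $m\in\mathbb{N}$ and $p=\{\mathfrak F^{-1}(n^a)\}$, and let $P_n:=\#\{k\le n:\{\mathfrak F^{-1}(k^a)\}\le\beta\}/n$. Then $$P_n=\begin{cases}\dfrac{r+\phi^{p/a}-1}{\phi^{p/a}}+O(m\phi^{-m/a})&\text{if }0\le p\le\beta,\\[2mm]\dfrac{r+\phi^{\beta/a}-1}{\phi^{p/a}}+O(m\phi^{-m/a})&\text{if }\beta<p<1.\end{cases}$$ In particular $\limsup_n P_n=r\phi^{1/a-\beta/a}=\beta+O(1/a)$ and $\liminf_n P_n=r=\beta+O(1/a)$.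
   Context: $\phi$ is the golden ratio; $\mathfrak F(x)=\frac{\phi}{\sqrt5}(\phi^x+\phi^{-x}\cos(\pi x)\phi^{-2})$, increasing on $[1,\infty)$ with $\mathfrak F(n)=F_n$ where $F_1=1,F_2=2,F_{n+2}=F_{n+1}+F_n$; $\mathfrak F^{-1}$ is its inverse on $[1,\infty)$; $\{y\}$ denotes the fractional part. *)

theory Defs
  imports "HOL-Analysis.Analysis" "HOL-Library.Landau_Symbols"
begin

definition phi :: real where
  "phi = (1 + sqrt 5) / 2"

text \<open>The continuous Fibonacci interpolant: FF n = F_n with F_1 = 1, F_2 = 2.\<close>
definition FF :: "real \<Rightarrow> real" where
  "FF x = phi / sqrt 5 * (phi powr x + phi powr (- x) * cos (pi * x) * phi powr (-2))"

definition FFinv :: "real \<Rightarrow> real" where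
  "FFinv = inv_into {1..} FF"

definition rr :: "nat \<Rightarrow> real \<Rightarrow> real" where
  "rr a \<beta> = (phi powr (\<beta> / real a) - 1) / (phi powr (1 / real a) - 1)"

definition Pn :: "nat \<Rightarrow> real \<Rightarrow> nat \<Rightarrow> real" where
  "Pn a \<beta> n = real (card {k \<in> {1..n}. frac (FFinv (real k ^ a)) \<le> \<beta>}) / real n"

definition mm :: "nat \<Rightarrow> nat \<Rightarrow> real" where
  "mm a n = of_int \<lfloor>FFinv (real n ^ a)\<rfloor>"

definition pp :: "nat \<Rightarrow> nat \<Rightarrow> real" where
  "pp a n = frac (FFinv (real n ^ a))"

definition main_term :: "nat \<Rightarrow> real \<Rightarrow> nat \<Rightarrow> real" where
  "main_term a \<beta> n =
     (if pp a n \<le> \<beta>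
      then (rr a \<beta> + phi powr (pp a n / real a) - 1) / phi powr (pp a n / real a)
      else (rr a \<beta> + phi powr (\<beta> / real a) - 1) / phi powr (pp a n / real a))"

end

theory Submission
  imports Defs
begin

lemma phi_gt1: "phi > 1" unfolding phi_def
proof -
  have "sqrt 5 > 1" by (simp add: real_less_rsqrt)
  then show "(1 + sqrt 5) / 2 > 1" by simp
qed

lemma phi_pos: "phi > 0" using phi_gt1 by simp

lemma phi_sq: "phi^2 = phi + 1"
  unfolding phi_def by (simp add: power2_eq_square field_simps)

lemma sqrt5_eq: "sqrt 5 = 2 * phi - 1" unfolding phi_def by (simp add: field_simps)

lemma phi_lt2: "phi < 2" unfolding phi_def
proof -
  have "sqrt 5 < 3" by (rule real_less_lsqrt) auto
  then show "(1 + sqrt 5) / 2 < 2" by simp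
qed

definition cc :: real where "cc = phi / sqrt 5"

lemma cc_pos: "cc > 0" unfolding cc_def using phi_pos by simp
lemma cc_lt1: "cc < 1" unfolding cc_def sqrt5_eq using phi_gt1 by simp

definition LL :: real where "LL = ln phi"
lemma LL_pos: "LL > 0" unfolding LL_def using phi_gt1 by simp
lemma LL_ge: "LL \<ge> 2 - phi"
proof -
  have "ln (1/phi) \<le> 1/phi - 1" by (rule ln_le_minus_one) (use phi_pos in simp)
  moreover have "1/phi = phi - 1" using phi_sq phi_pos by (simp add: field_simps power2_eq_square)
  moreover have "ln (1/phi) = - ln phi" using phi_pos by (simp add: ln_div)
  ultimately show ?thesis unfolding LL_def by linarith
qed

lemma FF_exp: "FF x = cc * (exp (x * LL) + exp (- x * LL) * cos (pi * x) * exp (-2 * LL))"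
  unfolding FF_def cc_def LL_def powr_def using phi_pos by simp

lemma phi_gt32: "phi > 3/2" unfolding phi_def
proof -
  have "sqrt 5 > 2" by (rule real_less_rsqrt) auto
  then show "(1 + sqrt 5) / 2 > 3/2" by simp
qed

definition DD :: "real \<Rightarrow> real" where
  "DD x = cc * (LL * exp (x * LL) - exp (- x * LL) * exp (-2 * LL) * (LL * cos (pi * x) + pi * sin (pi * x)))"

lemma FF_deriv: "(FF has_real_derivative DD x) (at x)"
proof -
  have e: "FF = (\<lambda>x. cc * (exp (x * LL) + exp (- x * LL) * cos (pi * x) * exp (-2 * LL)))"
    by (intro ext FF_exp)
  show ?thesis unfolding e DD_def
    by (auto intro!: derivative_eq_intros simp: algebra_simps)
qed

lemma DD_pos: assumes "x \<ge> 1" shows "DD x > 0"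
proof -
  define E where "E = exp (- x * LL) * exp (-2 * LL)"
  define S where "S = LL * cos (pi * x) + pi * sin (pi * x)"
  have Epos: "E > 0" unfolding E_def by simp
  have ex: "exp (x * LL) = E * exp ((2*x+2) * LL)"
  proof -
    have "E * exp ((2*x+2) * LL) = exp (- x * LL + -2 * LL + (2*x+2) * LL)"
      unfolding E_def exp_add by simp
    also have "- x * LL + -2 * LL + (2*x+2) * LL = x * LL" by (simp add: algebra_simps)
    finally show ?thesis by simp
  qed
  have "LL * exp (x * LL) > E * S"
  proof (cases "x \<le> 3/2")
    case True
    have x0: "0 \<le> x - 1" "x - 1 \<le> 1/2" using True assms by auto
    have eqp: "pi * x - pi = pi * (x - 1)" by (simp add: algebra_simps)
    have p0: "0 \<le> pi * (x - 1)" using x0 by simp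
    have p1: "pi * (x - 1) \<le> pi / 2" using mult_left_mono[OF x0(2), of pi] by simp
    have c: "cos (pi * x - pi) \<ge> 0" unfolding eqp by (rule cos_ge_zero) (use p0 p1 pi_gt_zero in linarith)+
    have s: "sin (pi * x - pi) \<ge> 0" unfolding eqp by (rule sin_ge_zero) (use p0 p1 pi_gt_zero in linarith)+
    have "cos (pi * x) \<le> 0" using c by (simp add: cos_diff)
    moreover have "sin (pi * x) \<le> 0" using s by (simp add: sin_diff)
    ultimately have "S \<le> 0" unfolding S_def using LL_pos
      by (simp add: add_nonpos_nonpos mult_nonneg_nonpos)
    then have "E * S \<le> 0" using Epos by (simp add: mult_nonneg_nonpos)
    moreover have "LL * exp (x * LL) > 0" using LL_pos by simp
    ultimately show ?thesis by linarith
  next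
    case False
    have "LL * cos (pi * x) \<le> LL" using LL_pos cos_le_one by (simp add: mult_left_le)
    moreover have "pi * sin (pi * x) \<le> pi" using sin_le_one by (simp add: mult_left_le)
    ultimately have "S \<le> LL + pi" unfolding S_def by linarith
    have p5: "phi ^ 5 = 5 * phi + 3"
      using phi_sq by algebra
    have "exp ((2*x+2) * LL) \<ge> exp (5 * LL)" using False LL_pos by simp
    also have "exp (5 * LL) = phi ^ 5" unfolding LL_def using phi_pos exp_of_nat_mult[of 5 "ln phi"]
      by simp
    finally have e5: "exp ((2*x+2) * LL) \<ge> 5 * phi + 3" using p5 by simp
    have "LL * (5 * phi + 2) \<ge> (2 - phi) * (5 * phi + 2)"
      using LL_ge phi_pos by (intro mult_right_mono) auto
    also have "(2 - phi) * (5 * phi + 2) = 3 * phi - 1" using phi_sq by (simp add: algebra_simps power2_eq_square)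
    finally have "LL * (5 * phi + 2) \<ge> 3 * phi - 1" .
    moreover have "pi < 3.2" using pi_approx(2) by simp
    ultimately have "LL * (5 * phi + 2) > pi" using phi_gt32 by linarith
    moreover have "LL * exp ((2*x+2) * LL) \<ge> LL * (5 * phi + 3)"
      by (rule mult_left_mono[OF e5]) (use LL_pos in simp)
    moreover have "LL * (5 * phi + 3) = LL * (5 * phi + 2) + LL" by (simp add: algebra_simps)
    ultimately have "LL * exp ((2*x+2) * LL) > LL + pi" by linarith
    then have "E * (LL * exp ((2*x+2) * LL)) > E * (LL + pi)" using Epos by simp
    moreover have "E * S \<le> E * (LL + pi)" by (rule mult_left_mono) (use \<open>S \<le> LL + pi\<close> Epos in auto)
    moreover have "LL * exp (x * LL) = E * (LL * exp ((2*x+2) * LL))" using ex by simp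
    ultimately show ?thesis by linarith
  qed
  then show ?thesis unfolding DD_def using cc_pos E_def S_def by simp
qed

lemma FF_strict_mono: assumes "1 \<le> x" "x < y" shows "FF x < FF y"
  using assms(2)
proof (rule DERIV_pos_imp_increasing)
  fix t assume "x \<le> t" "t \<le> y"
  then have "t \<ge> 1" using assms by linarith
  then show "\<exists>d. DERIV FF t :> d \<and> d > 0" using FF_deriv[of t] DD_pos[of t] by blast
qed

lemma FF_cont: "continuous_on S FF"
  using FF_deriv by (meson DERIV_isCont continuous_at_imp_continuous_on)




lemma FF_1: "FF 1 = 1"
proof -
  have a: "phi powr (-1) = 1/phi" using phi_pos by (simp add: powr_minus_divide)
  have b: "phi powr (-2) = 1/phi^2" using phi_pos by (simp add: powr_minus_divide powr_numeral)
  have c: "1/phi * (1/phi^2) = 1/phi^3" by (simp add: power2_eq_square power3_eq_cube)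
  have "FF 1 = phi / sqrt 5 * (phi + 1/phi * (-1) * (1/phi^2))" unfolding FF_def a b using phi_pos
    by simp
  also have "\<dots> = phi / sqrt 5 * (phi - 1/phi^3)" using c by simp
  also have "\<dots> = 1"
  proof -
    have h: "phi^2 * (2 - phi) = 1" using phi_sq by algebra
    have "1/phi^2 = (phi^2 * (2 - phi))/phi^2" using h by simp
    also have "\<dots> = 2 - phi" using phi_pos by simp
    finally have i2: "1/phi^2 = 2 - phi" .
    have d: "phi * (1/phi^3) = 1/phi^2" using phi_pos by (simp add: power2_eq_square power3_eq_cube)
    have "phi * (phi - 1/phi^3) = phi^2 - 1/phi^2" using d by (simp add: right_diff_distrib power2_eq_square)
    also have "\<dots> = 2 * phi - 1" using i2 phi_sq by simp
    finally have e: "phi * (phi - 1/phi^3) = 2 * phi - 1" .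
    have "phi / sqrt 5 * (phi - 1/phi^3) = (phi * (phi - 1/phi^3)) / sqrt 5" by simp
    also have "\<dots> = 1" unfolding e sqrt5_eq using phi_gt1 by simp
    finally show ?thesis .
  qed
  finally show ?thesis .
qed

lemma FF_lower: "FF x \<ge> cc * (exp (x * LL) - 1)" if "x \<ge> 0"
proof -
  define A where "A = exp (- x * LL) * exp (-2 * LL)"
  have "x * LL \<ge> 0" using that LL_pos by simp
  then have A1: "A \<le> 1" unfolding A_def using LL_pos by (simp add: exp_add[symmetric])
  have A0: "A > 0" unfolding A_def by simp
  have "A * cos (pi * x) \<ge> A * (-1)" using A0 by (intro mult_left_mono) auto
  then have "exp (- x * LL) * cos (pi * x) * exp (-2 * LL) \<ge> -1"
    using A1 unfolding A_def by (simp add: mult_ac)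
  then show ?thesis unfolding FF_exp using cc_pos by (intro mult_left_mono) auto
qed

lemma FF_le_iff: assumes "x \<ge> 1" "y \<ge> 1" shows "FF x \<le> FF y \<longleftrightarrow> x \<le> y"
proof
  assume "FF x \<le> FF y"
  show "x \<le> y"
  proof (rule ccontr)
    assume "\<not> x \<le> y"
    then have "FF y < FF x" using FF_strict_mono[of y x] assms by simp
    then show False using \<open>FF x \<le> FF y\<close> by simp
  qed
next
  assume "x \<le> y"
  then show "FF x \<le> FF y"
  proof (cases "x = y")
    case False
    then show ?thesis using FF_strict_mono[of x y] assms \<open>x \<le> y\<close> by simp
  qed simp
qed

lemma FF_ge1: "x \<ge> 1 \<Longrightarrow> FF x \<ge> 1"
  using FF_le_iff[of 1 x] FF_1 by simp

lemma FF_inj: "inj_on FF {1..}"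
proof (rule inj_onI)
  fix x y assume "x \<in> {1..}" "y \<in> {1..}" "FF x = FF y"
  then show "x = y" using FF_le_iff[of x y] FF_le_iff[of y x] by simp
qed

lemma FF_surj: assumes "y \<ge> 1" shows "y \<in> FF ` {1..}"
proof -
  define b where "b = max 1 (ln (y / cc + 1) / LL)"
  have b1: "b \<ge> 1" unfolding b_def by simp
  have "ln (y / cc + 1) / LL \<le> b" unfolding b_def by simp
  then have "ln (y / cc + 1) \<le> b * LL" using LL_pos by (simp add: pos_divide_le_eq)
  moreover have yp: "y / cc + 1 > 0"
  proof -
    have "y / cc > 0" using assms cc_pos by (intro divide_pos_pos) auto
    then show ?thesis by linarith
  qed
  ultimately have "exp (ln (y / cc + 1)) \<le> exp (b * LL)" by (simp only: exp_le_cancel_iff)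
  moreover have "exp (ln (y / cc + 1)) = y / cc + 1" using yp by (rule exp_ln)
  ultimately have "exp (b * LL) \<ge> y / cc + 1" by simp
  then have "cc * (exp (b * LL) - 1) \<ge> cc * (y / cc)" using cc_pos by (intro mult_left_mono) auto
  then have "cc * (exp (b * LL) - 1) \<ge> y" using cc_pos by simp
  then have "FF b \<ge> y" using FF_lower[of b] b1 by linarith
  then obtain x where "1 \<le> x" "x \<le> b" "FF x = y"
    using IVT'[of FF 1 y b] FF_1 assms b1 FF_cont by auto
  then show ?thesis by force
qed

lemma FFinv_ge1: "y \<ge> 1 \<Longrightarrow> FFinv y \<ge> 1"
  unfolding FFinv_def using FF_surj[of y] inv_into_into[of y FF "{1..}"] by simp

lemma FF_FFinv: "y \<ge> 1 \<Longrightarrow> FF (FFinv y) = y"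
  unfolding FFinv_def using FF_surj[of y] f_inv_into_f[of y FF "{1..}"] by simp

lemma FFinv_FF: "x \<ge> 1 \<Longrightarrow> FFinv (FF x) = x"
  unfolding FFinv_def using FF_inj inv_into_f_f[of FF "{1..}" x] by simp

lemma le_FFinv_iff: "x \<ge> 1 \<Longrightarrow> y \<ge> 1 \<Longrightarrow> x \<le> FFinv y \<longleftrightarrow> FF x \<le> y"
  using FF_le_iff[of x "FFinv y"] FF_FFinv[of y] FFinv_ge1[of y] by simp

lemma FFinv_le_iff: "x \<ge> 1 \<Longrightarrow> y \<ge> 1 \<Longrightarrow> FFinv y \<le> x \<longleftrightarrow> y \<le> FF x"
  using FF_le_iff[of "FFinv y" x] FF_FFinv[of y] FFinv_ge1[of y] by simp


definition GG :: "nat \<Rightarrow> real \<Rightarrow> real" where "GG a x = FF x powr (1 / real a)"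
definition HH :: "nat \<Rightarrow> real \<Rightarrow> real" where "HH a x = cc powr (1 / real a) * phi powr (x / real a)"

lemma GG_pow: assumes "a \<ge> 1" "x \<ge> 1" shows "GG a x ^ a = FF x"
proof -
  have "FF x \<noteq> 0" using FF_ge1[OF assms(2)] by simp
  then have "GG a x ^ a = FF x powr (real a * (1 / real a))" unfolding GG_def by (simp add: powr_power)
  also have "\<dots> = FF x" using assms FF_ge1[OF assms(2)] by simp
  finally show ?thesis .
qed

lemma GG_ge1: "x \<ge> 1 \<Longrightarrow> GG a x \<ge> 1"
  unfolding GG_def by (intro ge_one_powr_ge_zero FF_ge1) auto

lemma le_T_iff: assumes "a \<ge> 1" "y \<ge> 1" "x \<ge> 1"
  shows "x \<le> FFinv (y ^ a) \<longleftrightarrow> GG a x \<le> y"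
proof -
  have y1: "y ^ a \<ge> 1" using assms by simp
  have "x \<le> FFinv (y ^ a) \<longleftrightarrow> FF x \<le> y ^ a" using le_FFinv_iff[OF assms(3) y1] .
  also have "\<dots> \<longleftrightarrow> GG a x ^ a \<le> y ^ a" using GG_pow assms by simp
  also have "\<dots> \<longleftrightarrow> GG a x \<le> y" using GG_ge1[OF assms(3), of a] assms by (intro power_mono_iff) auto
  finally show ?thesis .
qed

lemma T_le_iff: assumes "a \<ge> 1" "y \<ge> 1" "x \<ge> 1"
  shows "FFinv (y ^ a) \<le> x \<longleftrightarrow> y \<le> GG a x"
proof -
  have y1: "y ^ a \<ge> 1" using assms by simp
  have "FFinv (y ^ a) \<le> x \<longleftrightarrow> y ^ a \<le> FF x" using FFinv_le_iff[OF assms(3) y1] .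
  also have "\<dots> \<longleftrightarrow> y ^ a \<le> GG a x ^ a" using GG_pow assms by simp
  also have "\<dots> \<longleftrightarrow> y \<le> GG a x" using GG_ge1[OF assms(3), of a] assms by (intro power_mono_iff) auto
  finally show ?thesis .
qed

lemma T_ge1: "a \<ge> 1 \<Longrightarrow> y \<ge> 1 \<Longrightarrow> FFinv (y ^ a) \<ge> 1"
  by (intro FFinv_ge1) simp

lemma GG_T: assumes "a \<ge> 1" "y \<ge> 1" shows "GG a (FFinv (y ^ a)) = y"
  using le_T_iff[OF assms T_ge1[OF assms]] T_le_iff[OF assms T_ge1[OF assms]] by simp

lemma GG_mono: assumes "1 \<le> x" "x \<le> y" shows "GG a x \<le> GG a y"
  unfolding GG_def by (rule powr_mono2) (use FF_le_iff[of x y] FF_ge1[of x] assms in auto)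

lemma powr_near1: fixes e s :: real assumes "\<bar>e\<bar> < 1" "0 \<le> s" "s \<le> 1"
  shows "\<bar>(1 + e) powr s - 1\<bar> \<le> \<bar>e\<bar>"
proof (cases "e \<ge> 0")
  case True
  have "1 powr s \<le> (1 + e) powr s" by (rule powr_mono2) (use True assms in auto)
  then have "1 \<le> (1 + e) powr s" by simp
  moreover have "(1 + e) powr s \<le> (1 + e) powr 1" by (rule powr_mono) (use True assms in auto)
  ultimately show ?thesis using True assms by auto
next
  case False
  have "(1 + e) powr s \<le> 1" by (rule powr_le1) (use False assms in auto)
  moreover have "(1 + e) powr 1 \<le> (1 + e) powr s" by (rule powr_mono') (use False assms in auto)
  ultimately show ?thesis using False assms by auto
qed

lemma cc'_le1: "cc powr (1 / real a) \<le> 1"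
  using cc_pos cc_lt1 by (intro powr_le1) auto

lemma cc'_pos: "cc powr (1 / real a) > 0"
  using cc_pos by simp

lemma HH_pos: "HH a x > 0" unfolding HH_def using cc_pos phi_pos by simp

lemma GH_bound: assumes "a \<ge> 1" "x \<ge> 1" shows "\<bar>GG a x - HH a x\<bar> \<le> 1"
proof -
  define e where "e = exp ((-2*x-2) * LL) * cos (pi * x)"
  define s where "s = 1 / real a"
  have s: "0 \<le> s" "s \<le> 1" unfolding s_def using assms by auto
  have E1: "exp ((-2*x-2) * LL) < 1" using assms LL_pos by (simp add: mult_neg_pos)
  have ea: "\<bar>e\<bar> \<le> exp ((-2*x-2) * LL)" unfolding e_def abs_mult
    using mult_left_le[OF abs_cos_le_one[of "pi * x"], of "\<bar>exp ((-2*x-2) * LL)\<bar>"] by simp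
  then have e1: "\<bar>e\<bar> < 1" using E1 by linarith
  have k: "exp (x*LL) * exp ((-2*x-2)*LL) = exp (-x*LL) * exp (-2*LL)"
  proof -
    have "x*LL + (-2*x-2)*LL = -x*LL + -2*LL" by (simp add: algebra_simps)
    then show ?thesis by (metis exp_add)
  qed
  have "(cc * exp (x * LL)) * (1 + e) = cc * (exp (x*LL) + (exp (x*LL) * exp ((-2*x-2)*LL)) * cos (pi * x))"
    unfolding e_def by (simp add: algebra_simps)
  also have "\<dots> = cc * (exp (x*LL) + (exp (-x*LL) * exp (-2*LL)) * cos (pi * x))"
    by (simp only: k)
  also have "\<dots> = FF x" unfolding FF_exp by (simp add: algebra_simps)
  finally have FFe: "FF x = (cc * exp (x * LL)) * (1 + e)" by simp
  have "GG a x = (cc * exp (x * LL)) powr s * (1 + e) powr s"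
    unfolding GG_def FFe s_def by (rule powr_mult)
  also have "(cc * exp (x * LL)) powr s = HH a x"
  proof -
    have px: "exp (x * LL) = phi powr x" unfolding LL_def powr_def using phi_pos by simp
    have "(cc * exp (x * LL)) powr s = cc powr s * (phi powr x) powr s" by (simp add: powr_mult px)
    also have "\<dots> = HH a x" unfolding HH_def s_def by (simp add: powr_powr)
    finally show ?thesis .
  qed
  finally have Ge: "GG a x = HH a x * (1 + e) powr s" .
  have "\<bar>GG a x - HH a x\<bar> = HH a x * \<bar>(1 + e) powr s - 1\<bar>"
  proof -
    have "GG a x - HH a x = HH a x * ((1 + e) powr s - 1)" unfolding Ge by (simp add: algebra_simps)
    then show ?thesis using HH_pos[of a x] by (simp add: abs_mult)
  qed
  also have "\<dots> \<le> HH a x * exp ((-2*x-2) * LL)"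
    by (rule mult_left_mono) (use powr_near1[OF e1 s] ea HH_pos[of a x] in auto)
  also have "\<dots> = cc powr s * exp (x * s * LL + (-2*x-2) * LL)"
  proof -
    have "phi powr (x / real a) = exp (x * s * LL)" unfolding powr_def LL_def s_def using phi_pos by simp
    then show ?thesis unfolding HH_def s_def by (simp add: exp_add mult_ac)
  qed
  also have "\<dots> \<le> 1 * 1"
  proof (intro mult_mono)
    show "cc powr s \<le> 1" unfolding s_def by (rule cc'_le1)
    have "x * s \<le> x" using s assms by (simp add: mult_left_le)
    moreover have "x * s * LL + (-2*x-2) * LL = (x * s - 2*x - 2) * LL" by (simp add: algebra_simps)
    moreover have "x * s - 2 * x - 2 \<le> 0" using \<open>x * s \<le> x\<close> assms by linarith
    ultimately have "x * s * LL + (-2*x-2) * LL \<le> 0" using LL_pos mult_nonpos_nonneg[of "x * s - 2 * x - 2" LL]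
      by linarith
    then show "exp (x * s * LL + (-2*x-2) * LL) \<le> 1" by simp
  qed auto
  finally show ?thesis by simp
qed

lemma card_interval:
  assumes "0 \<le> u" "u \<le> v"
  shows "\<bar>real (card {k::nat. u \<le> real k \<and> real k \<le> v}) - (v - u)\<bar> \<le> 1"
proof -
  have fv: "\<lfloor>v\<rfloor> \<ge> 0" using assms by simp
  have cu: "\<lceil>u\<rceil> \<ge> 0" using assms by simp
  have eq: "{k::nat. u \<le> real k \<and> real k \<le> v} = {nat \<lceil>u\<rceil>..nat \<lfloor>v\<rfloor>}"
  proof (rule set_eqI)
    fix k :: nat
    have "u \<le> real k \<longleftrightarrow> \<lceil>u\<rceil> \<le> int k" by (simp add: ceiling_le_iff)
    moreover have "real k \<le> v \<longleftrightarrow> int k \<le> \<lfloor>v\<rfloor>" by (simp add: le_floor_iff)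
    ultimately show "k \<in> {k::nat. u \<le> real k \<and> real k \<le> v} \<longleftrightarrow> k \<in> {nat \<lceil>u\<rceil>..nat \<lfloor>v\<rfloor>}"
      using fv cu by auto
  qed
  have c1: "of_int \<lceil>u\<rceil> - 1 < u" "u \<le> of_int \<lceil>u\<rceil>" using ceiling_correct[of u] by auto
  have f1: "of_int \<lfloor>v\<rfloor> \<le> v" "v < of_int \<lfloor>v\<rfloor> + 1" using floor_correct[of v] by auto
  have le: "\<lceil>u\<rceil> \<le> \<lfloor>v\<rfloor> + 1" using c1 f1 assms by linarith
  have le2: "nat \<lceil>u\<rceil> \<le> Suc (nat \<lfloor>v\<rfloor>)" using le fv cu by linarith
  have "real (card {nat \<lceil>u\<rceil>..nat \<lfloor>v\<rfloor>}) = real (Suc (nat \<lfloor>v\<rfloor>)) - real (nat \<lceil>u\<rceil>)"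
    using le2 by (simp add: of_nat_diff)
  also have "\<dots> = of_int \<lfloor>v\<rfloor> + 1 - of_int \<lceil>u\<rceil>" using fv cu by simp
  finally have "real (card {nat \<lceil>u\<rceil>..nat \<lfloor>v\<rfloor>}) = of_int \<lfloor>v\<rfloor> + 1 - of_int \<lceil>u\<rceil>" .
  then show ?thesis unfolding eq using c1 f1 by linarith
qed

lemma final_alg:
  fixes C n N Z E :: real
  assumes "0 \<le> C" "C \<le> n" "n \<ge> 1" "N > 0" "\<bar>n - N\<bar> \<le> 1" "\<bar>C - Z\<bar> \<le> E"
  shows "\<bar>C / n - Z / N\<bar> \<le> (1 + E) / N"
proof -
  have nz: "n \<noteq> 0" "N \<noteq> 0" using assms(3,4) by auto
  have npos: "n * N > 0" using assms(3,4) by simp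
  have eq: "C / n - Z / N = (C * (N - n) + n * (C - Z)) / (n * N)" using nz by (simp add: field_simps)
  have a1: "\<bar>C * (N - n)\<bar> = C * \<bar>n - N\<bar>" using assms(1) by (simp add: abs_mult abs_minus_commute)
  have a2: "C * \<bar>n - N\<bar> \<le> C * 1" by (rule mult_left_mono) (use assms(1,5) in auto)
  have a3: "\<bar>n * (C - Z)\<bar> = n * \<bar>C - Z\<bar>" using assms(3) by (simp add: abs_mult)
  have a4: "n * \<bar>C - Z\<bar> \<le> n * E" by (rule mult_left_mono) (use assms(3,6) in auto)
  have a5: "n * (1 + E) = n + n * E" by (simp add: algebra_simps)
  have num: "\<bar>C * (N - n) + n * (C - Z)\<bar> \<le> n * (1 + E)"
    using abs_triangle_ineq[of "C * (N - n)" "n * (C - Z)"] a1 a2 a3 a4 a5 assms(2) by linarith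
  have "\<bar>C / n - Z / N\<bar> = \<bar>C * (N - n) + n * (C - Z)\<bar> / (n * N)"
    unfolding eq abs_divide using npos by simp
  also have "\<dots> \<le> n * (1 + E) / (n * N)" by (rule divide_right_mono) (use num npos in auto)
  also have "\<dots> = (1 + E) / N" using nz by simp
  finally show ?thesis .
qed

lemma HH_add: "HH a (x + y) = HH a x * phi powr (y / real a)"
  unfolding HH_def by (simp add: powr_add add_divide_distrib)

lemma qq_gt1: "a \<ge> 1 \<Longrightarrow> phi powr (1 / real a) > 1"
  using powr_less_mono[of 0 "1 / real a" phi] phi_gt1 by simp

lemma main_bound:
  assumes a: "a \<ge> 1" and b0: "0 \<le> \<beta>" and b1: "\<beta> < 1" and n: "n \<ge> 1"
  shows "\<bar>Pn a \<beta> n - main_term a \<beta> n\<bar>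
           \<le> 6 / cc powr (1 / real a) * mm a n * phi powr (- mm a n / real a)"
proof -
  define T where "T k = FFinv (real k ^ a)" for k :: nat
  define t where "t = T n"
  define M where "M = nat \<lfloor>t\<rfloor>"
  define p where "p = frac t"
  define q where "q = phi powr (1 / real a)"
  define bq where "bq = phi powr (\<beta> / real a)"
  define r where "r = rr a \<beta>"
  define c' where "c' = cc powr (1 / real a)"
  have T1: "T k \<ge> 1" if "k \<ge> 1" for k unfolding T_def using a that by (intro T_ge1) auto
  have t1: "t \<ge> 1" using T1 n unfolding t_def by simp
  have fl1: "\<lfloor>t\<rfloor> \<ge> 1" using t1 by (simp add: le_floor_iff)
  have M1: "M \<ge> 1"
  proof -
    have "nat 1 \<le> nat \<lfloor>t\<rfloor>" using fl1 by (rule nat_mono)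
    then show ?thesis unfolding M_def by simp
  qed
  have rM: "real M = of_int \<lfloor>t\<rfloor>" unfolding M_def using fl1 by simp
  have tM: "t = real M + p" unfolding p_def frac_def rM by simp
  have p0: "0 \<le> p" and p1: "p < 1" unfolding p_def by (simp_all add: frac_lt_1)
  have mmM: "mm a n = real M" unfolding mm_def rM t_def T_def by simp
  have ppp: "pp a n = p" unfolding pp_def p_def t_def T_def by simp
  have Gt: "GG a t = real n" unfolding t_def T_def using GG_T[of a "real n"] a n by simp
  have leT: "x \<le> T k \<longleftrightarrow> GG a x \<le> real k" if "k \<ge> 1" "x \<ge> 1" for k x
    unfolding T_def using le_T_iff[of a "real k" x] a that by simp
  have Tle: "T k \<le> x \<longleftrightarrow> real k \<le> GG a x" if "k \<ge> 1" "x \<ge> 1" for k x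
    unfolding T_def using T_le_iff[of a "real k" x] a that by simp
  define bb where "bb j = (if j = M then min p \<beta> else \<beta>)" for j :: nat
  define I where "I j = {k::nat. GG a (real j) \<le> real k \<and> real k \<le> GG a (real j + bb j)}" for j :: nat
  define S where "S = {k \<in> {1..n}. frac (FFinv (real k ^ a)) \<le> \<beta>}"
  have bb0: "0 \<le> bb j" and bb1: "bb j \<le> \<beta>" for j unfolding bb_def using b0 p0 by auto
  have floorI: "\<lfloor>T k\<rfloor> = int j \<and> k \<ge> 1 \<and> real j \<le> T k \<and> T k \<le> real j + bb j"
    if j: "j \<in> {1..M}" and k: "k \<in> I j" for j k
  proof -
    have j1: "real j \<ge> 1" using j by simp
    have "GG a (real j) \<ge> 1" using GG_ge1 j1 by blast
    then have k1: "k \<ge> 1" using k unfolding I_def by simp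
    have "real j \<le> T k" using leT[OF k1 j1] k unfolding I_def by simp
    moreover have "T k \<le> real j + bb j" using Tle[OF k1, of "real j + bb j"] k j1 bb0[of j] unfolding I_def by simp
    ultimately show ?thesis using bb1[of j] b1 k1 by (simp add: floor_eq_iff)
  qed
  have S_eq: "S = (\<Union>j\<in>{1..M}. I j)"
  proof (rule set_eqI, rule iffI)
    fix k assume "k \<in> S"
    then have k1: "1 \<le> k" "k \<le> n" and fr: "frac (T k) \<le> \<beta>" unfolding S_def T_def by auto
    define j where "j = nat \<lfloor>T k\<rfloor>"
    have Tk1: "T k \<ge> 1" by (rule T1[OF k1(1)])
    have fl: "\<lfloor>T k\<rfloor> \<ge> 1" using Tk1 by (simp add: le_floor_iff)
    have rj: "real j = of_int \<lfloor>T k\<rfloor>" unfolding j_def using fl by simp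
    have Tkj: "T k = real j + frac (T k)" unfolding frac_def rj by simp
    have Tkt: "T k \<le> t" using Tle[OF k1(1) t1] Gt k1(2) by simp
    have j1: "j \<ge> 1" using nat_mono[OF fl] unfolding j_def by simp
    have jM: "j \<le> M" unfolding j_def M_def using Tkt by (intro nat_mono floor_mono)
    have "real j \<le> T k" using Tkj frac_ge_0[of "T k"] by linarith
    then have G1: "GG a (real j) \<le> real k" using leT[OF k1(1)] j1 by simp
    have Tb: "T k \<le> real j + bb j"
    proof (cases "j = M")
      case True
      then have "T k \<le> real j + p" using Tkt tM by simp
      moreover have "T k \<le> real j + \<beta>" using Tkj fr by simp
      ultimately show ?thesis unfolding bb_def using True by simp
    next
      case False
      then show ?thesis unfolding bb_def using Tkj fr by simp
    qed
    then have G2: "real k \<le> GG a (real j + bb j)" using Tle[OF k1(1)] j1 bb0[of j] by simp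
    show "k \<in> (\<Union>j\<in>{1..M}. I j)" using j1 jM G1 G2 unfolding I_def by auto
  next
    fix k assume "k \<in> (\<Union>j\<in>{1..M}. I j)"
    then obtain j where j: "j \<in> {1..M}" "k \<in> I j" by auto
    from floorI[OF j] have fj: "\<lfloor>T k\<rfloor> = int j" "k \<ge> 1" "T k \<le> real j + bb j" by auto
    have "frac (T k) = T k - real j" unfolding frac_def fj(1) by simp
    then have frb: "frac (T k) \<le> \<beta>" using fj(3) bb1[of j] by simp
    have "T k \<le> t"
    proof (cases "j = M")
      case True
      then show ?thesis using fj(3) tM unfolding bb_def by simp
    next
      case False
      then have "j + 1 \<le> M" using j by simp
      then have "real j + 1 \<le> real M" by linarith
      then show ?thesis using fj(3) bb1[of j] b1 tM p0 by simp
    qed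
    then have "real k \<le> real n" using Tle[OF fj(2) t1] Gt by simp
    then show "k \<in> S" unfolding S_def T_def using fj(2) frb T_def by simp
  qed
  have finI: "finite (I j)" for j
  proof -
    have "I j \<subseteq> {..nat \<lceil>GG a (real j + bb j)\<rceil>}"
    proof
      fix k assume "k \<in> I j"
      then have "real k \<le> GG a (real j + bb j)" by (simp add: I_def)
      then have "\<lceil>real k\<rceil> \<le> \<lceil>GG a (real j + bb j)\<rceil>" by (rule ceiling_mono)
      then have "int k \<le> \<lceil>GG a (real j + bb j)\<rceil>" by simp
      then have "nat (int k) \<le> nat \<lceil>GG a (real j + bb j)\<rceil>" by (rule nat_mono)
      then show "k \<in> {..nat \<lceil>GG a (real j + bb j)\<rceil>}" by simp
    qed
    then show ?thesis using finite_subset by blast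
  qed
  have disj: "\<forall>i\<in>{1..M}. \<forall>j\<in>{1..M}. i \<noteq> j \<longrightarrow> I i \<inter> I j = {}"
  proof (intro ballI impI)
    fix i j assume ij: "i \<in> {1..M}" "j \<in> {1..M}" "i \<noteq> j"
    show "I i \<inter> I j = {}"
    proof (rule ccontr)
      assume "I i \<inter> I j \<noteq> {}"
      then obtain k where "k \<in> I i" "k \<in> I j" by blast
      then have "\<lfloor>T k\<rfloor> = int i" "\<lfloor>T k\<rfloor> = int j" using floorI ij by blast+
      then show False using ij by simp
    qed
  qed
  have cardS: "card S = (\<Sum>j\<in>{1..M}. card (I j))"
    unfolding S_eq by (rule card_UN_disjoint) (use finI disj in auto)
  have card_terms: "\<bar>real (card (I j)) - (HH a (real j + bb j) - HH a (real j))\<bar> \<le> 3"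
    if "j \<in> {1..M}" for j
  proof -
    have j1: "real j \<ge> 1" using that by simp
    have jb1: "real j + bb j \<ge> 1" using j1 bb0[of j] by linarith
    have g1: "GG a (real j) \<ge> 1" using GG_ge1 j1 by blast
    have gm: "GG a (real j) \<le> GG a (real j + bb j)" using GG_mono[of "real j" "real j + bb j"] j1 bb0[of j] by simp
    have ci: "\<bar>real (card (I j)) - (GG a (real j + bb j) - GG a (real j))\<bar> \<le> 1"
      unfolding I_def by (rule card_interval) (use g1 gm in auto)
    have h1: "\<bar>GG a (real j) - HH a (real j)\<bar> \<le> 1" by (rule GH_bound[OF a j1])
    have h2: "\<bar>GG a (real j + bb j) - HH a (real j + bb j)\<bar> \<le> 1" by (rule GH_bound[OF a jb1])
    show ?thesis using ci h1 h2 by (simp only: abs_le_iff) linarith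
  qed
  define X where "X = (\<Sum>j\<in>{1..M}. (HH a (real j + bb j) - HH a (real j)))"
  have sum_bound: "\<bar>real (card S) - X\<bar> \<le> 3 * real M"
  proof -
    have "real (card S) - X = (\<Sum>j\<in>{1..M}. (real (card (I j)) - (HH a (real j + bb j) - HH a (real j))))"
      unfolding cardS X_def by (simp add: sum_subtractf)
    then have "\<bar>real (card S) - X\<bar> \<le> (\<Sum>j\<in>{1..M}. \<bar>real (card (I j)) - (HH a (real j + bb j) - HH a (real j))\<bar>)"
      using sum_abs by metis
    also have "\<dots> \<le> (\<Sum>j\<in>{1..M}. 3)" by (rule sum_mono) (use card_terms in auto)
    also have "\<dots> = 3 * real M" by simp
    finally show ?thesis .
  qed
  have q1: "q > 1" unfolding q_def using qq_gt1[OF a] .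
  have HHs: "HH a (real (Suc j)) = HH a (real j) * q" for j
    using HH_add[of a "real j" 1] unfolding q_def by (simp add: add.commute)
  define phm where "phm = phi powr (min p \<beta> / real a)"
  have sum_eval: "X = (\<Sum>j\<in>{1..M}. HH a (real j)) * (bq - 1) + HH a (real M) * (phm - bq)"
  proof -
    have "HH a (real j + bb j) - HH a (real j)
          = HH a (real j) * (bq - 1) + (if j = M then HH a (real M) * (phm - bq) else 0)" for j
      unfolding bb_def bq_def phm_def HH_add by (auto simp: algebra_simps)
    then have "X = (\<Sum>j\<in>{1..M}. HH a (real j) * (bq - 1) + (if j = M then HH a (real M) * (phm - bq) else 0))"
      unfolding X_def by simp
    also have "\<dots> = (\<Sum>j\<in>{1..M}. HH a (real j)) * (bq - 1) + HH a (real M) * (phm - bq)"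
      using M1 by (simp add: sum.distrib sum_distrib_right)
    finally show ?thesis .
  qed
  have tele: "(\<Sum>j\<in>{1..M}. HH a (real j)) * (q - 1) = HH a (real M) * q - HH a 1"
  proof -
    have "(\<Sum>j\<in>{1..M}. HH a (real j)) * (q - 1) = (\<Sum>j\<in>{1..M}. HH a (real j) * (q - 1))"
      by (rule sum_distrib_right)
    also have "\<dots> = (\<Sum>j\<in>{1..M}. HH a (real (Suc j)) - HH a (real j))"
      unfolding HHs by (simp add: algebra_simps)
    also have "\<dots> = HH a (real (Suc M)) - HH a (real 1)"
      by (rule sum_Suc_diff[where f = "\<lambda>j. HH a (real j)"]) (use M1 in simp)
    also have "\<dots> = HH a (real M) * q - HH a 1" unfolding HHs by simp
    finally show ?thesis .
  qed
  have bq1: "bq \<ge> 1" unfolding bq_def using phi_gt1 b0 by (intro ge_one_powr_ge_zero) auto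
  have bqq: "bq \<le> q" unfolding bq_def q_def using phi_gt1 b0 b1 a
    by (intro powr_mono) (auto simp: divide_right_mono)
  have rdef: "r = (bq - 1) / (q - 1)" unfolding r_def rr_def bq_def q_def by simp
  have r0: "0 \<le> r" unfolding rdef using bq1 q1 by simp
  have r1: "r \<le> 1" unfolding rdef using bqq q1 by simp
  have rq: "r * q = r + bq - 1"
  proof -
    have "r * (q - 1) = bq - 1" unfolding rdef using q1 by simp
    then show ?thesis by (simp add: algebra_simps)
  qed
  define Y where "Y = r + phm - 1"
  have sumHH: "(\<Sum>j\<in>{1..M}. HH a (real j)) = (HH a (real M) * q - HH a 1) / (q - 1)"
    using tele q1 by (simp add: eq_divide_eq)
  have XY: "X = HH a (real M) * Y - r * HH a 1"
  proof -
    have "X = r * (HH a (real M) * q - HH a 1) + HH a (real M) * (phm - bq)"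
      unfolding sum_eval sumHH rdef by simp
    also have "\<dots> = HH a (real M) * (r * q + phm - bq) - r * HH a 1" by (simp add: algebra_simps)
    also have "\<dots> = HH a (real M) * Y - r * HH a 1" unfolding rq Y_def by (simp add: algebra_simps)
    finally show ?thesis .
  qed
  have H1: "HH a 1 \<le> 2"
  proof -
    have "q \<le> phi powr 1" unfolding q_def using phi_gt1 a by (intro powr_mono) auto
    then have "q \<le> 2" using phi_lt2 phi_pos by simp
    moreover have "HH a 1 = c' * q" unfolding HH_def c'_def q_def by simp
    moreover have "c' \<le> 1" "c' > 0" unfolding c'_def using cc'_le1 cc'_pos by auto
    ultimately show ?thesis using q1 mult_mono[of c' 1 q 2] by simp
  qed
  have rH: "\<bar>r * HH a 1\<bar> \<le> 2"
  proof -
    have "0 \<le> r * HH a 1" using r0 HH_pos[of a 1] by simp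
    moreover have "r * HH a 1 \<le> 1 * 2" using r0 r1 H1 HH_pos[of a 1] by (intro mult_mono) auto
    ultimately show ?thesis by simp
  qed
  have cS: "\<bar>real (card S) - HH a (real M) * Y\<bar> \<le> 3 * real M + 2"
    using sum_bound rH unfolding XY by (simp only: abs_le_iff) linarith
  define N' where "N' = HH a t"
  have N'eq: "N' = HH a (real M) * phi powr (p / real a)" unfolding N'_def tM HH_add ..
  have N'pos: "N' > 0" unfolding N'_def by (rule HH_pos)
  have nN: "\<bar>real n - N'\<bar> \<le> 1" using GH_bound[OF a t1] Gt unfolding N'_def by simp
  have php: "phi powr (p / real a) \<ge> 1" using phi_gt1 p0 by (intro ge_one_powr_ge_zero) auto
  have main: "main_term a \<beta> n = Y / phi powr (p / real a)"
    unfolding main_term_def ppp Y_def phm_def r_def bq_def[symmetric]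
    by (cases "p \<le> \<beta>") (auto simp: min_def bq_def)
  have main2: "main_term a \<beta> n = HH a (real M) * Y / N'"
    unfolding main N'eq using HH_pos[of a "real M"] by simp
  have PnS: "Pn a \<beta> n = real (card S) / real n" unfolding Pn_def S_def ..
  have cardle: "card S \<le> n"
  proof -
    have "card S \<le> card {1..n}" unfolding S_def by (rule card_mono) auto
    then show ?thesis by simp
  qed
  have fa: "\<bar>real (card S) / real n - HH a (real M) * Y / N'\<bar> \<le> (1 + (3 * real M + 2)) / N'"
    by (rule final_alg) (use cardle n N'pos nN cS in auto)
  have "(1 + (3 * real M + 2)) / N' \<le> (6 * real M) / N'"
    using M1 N'pos by (intro divide_right_mono) auto
  also have "\<dots> \<le> (6 * real M) / HH a (real M)"
  proof (rule divide_left_mono)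
    show "HH a (real M) \<le> N'" unfolding N'eq using php HH_pos[of a "real M"] by simp
    show "0 \<le> 6 * real M" by simp
    show "0 < N' * HH a (real M)" using N'pos HH_pos[of a "real M"] by simp
  qed
  also have "\<dots> = 6 / cc powr (1 / real a) * real M * phi powr (- real M / real a)"
    unfolding HH_def using phi_pos by (simp add: powr_minus_divide)
  finally show ?thesis using fa unfolding PnS main2[symmetric] mmM by simp
qed

lemma mm_at_top: assumes a: "a \<ge> 1" shows "filterlim (\<lambda>n. mm a n) at_top sequentially"
  unfolding filterlim_at_top
proof
  fix Z :: real
  define K where "K = nat \<lceil>Z\<rceil> + 1"
  define N where "N = max 1 (nat \<lceil>GG a (real K)\<rceil>)"
  have K1: "real K \<ge> 1" unfolding K_def by simp
  have ZK: "Z \<le> real K" unfolding K_def by linarith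
  have "Z \<le> mm a n" if n: "n \<ge> N" for n
  proof -
    have n1: "n \<ge> 1" using n unfolding N_def by simp
    have "real n \<ge> real (nat \<lceil>GG a (real K)\<rceil>)" using n unfolding N_def by simp
    then have "GG a (real K) \<le> real n" by linarith
    then have "real K \<le> FFinv (real n ^ a)" using le_T_iff[of a "real n" "real K"] a n1 K1 by simp
    then have "int K \<le> \<lfloor>FFinv (real n ^ a)\<rfloor>" by (simp add: le_floor_iff)
    then have "real K \<le> mm a n" unfolding mm_def by linarith
    then show ?thesis using ZK by linarith
  qed
  then show "eventually (\<lambda>n. Z \<le> mm a n) sequentially" unfolding eventually_sequentially by blast
qed

lemma decay: assumes a: "a \<ge> 1" shows "((\<lambda>x. x * phi powr (- x / real a)) \<longlongrightarrow> 0) at_top"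
proof -
  define c where "c = LL / real a"
  have c0: "c > 0" unfolding c_def using LL_pos a by simp
  have lim1: "filterlim (\<lambda>x. c * x) at_top at_top"
    by (rule filterlim_tendsto_pos_mult_at_top[OF tendsto_const c0 filterlim_ident])
  have lim2: "((\<lambda>x. (c * x) ^ 1 / exp (c * x)) \<longlongrightarrow> 0) at_top"
    using filterlim_compose[OF tendsto_power_div_exp_0[of 1] lim1] .
  have lim3: "((\<lambda>x. (1 / c) * ((c * x) ^ 1 / exp (c * x))) \<longlongrightarrow> (1 / c) * 0) at_top"
    by (rule tendsto_mult[OF tendsto_const lim2])
  have eq: "(1 / c) * ((c * x) ^ 1 / exp (c * x)) = x * phi powr (- x / real a)" for x
  proof -
    have "phi powr (- x / real a) = exp (- (c * x))" unfolding powr_def c_def LL_def using phi_pos a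
      by (simp add: algebra_simps)
    then show ?thesis using c0 by (simp add: exp_minus field_simps)
  qed
  show ?thesis using lim3 unfolding eq by simp
qed

lemma err_to0:
  assumes a: "a \<ge> 1" and b0: "0 \<le> \<beta>" and b1: "\<beta> < 1"
  shows "((\<lambda>n. Pn a \<beta> n - main_term a \<beta> n) \<longlongrightarrow> 0) sequentially"
proof (rule Lim_null_comparison)
  define K where "K = 6 / cc powr (1 / real a)"
  show "eventually (\<lambda>n. norm (Pn a \<beta> n - main_term a \<beta> n) \<le> K * (mm a n * phi powr (- mm a n / real a))) sequentially"
    unfolding eventually_sequentially K_def
    using main_bound[OF a b0 b1] by (intro exI[of _ 1]) (auto simp: mult.assoc)
  have "((\<lambda>n. mm a n * phi powr (- mm a n / real a)) \<longlongrightarrow> 0) sequentially"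
    using filterlim_compose[OF decay[OF a] mm_at_top[OF a]] .
  then show "((\<lambda>n. K * (mm a n * phi powr (- mm a n / real a))) \<longlongrightarrow> 0) sequentially"
    using tendsto_mult[OF tendsto_const[of K]] by fastforce
qed

definition MT :: "nat \<Rightarrow> real \<Rightarrow> real \<Rightarrow> real" where
  "MT a \<beta> p = (rr a \<beta> + phi powr (min p \<beta> / real a) - 1) / phi powr (p / real a)"

lemma main_MT: "main_term a \<beta> n = MT a \<beta> (pp a n)"
  unfolding main_term_def MT_def by (simp add: min_def)

lemma MT_cont: assumes "a \<ge> 1" shows "isCont (MT a \<beta>) p0"
  unfolding MT_def using phi_pos assms by (intro continuous_intros) auto

lemma rr_facts:
  assumes a: "a \<ge> 1" and b0: "0 \<le> \<beta>" and b1: "\<beta> \<le> 1"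
  shows "0 \<le> rr a \<beta>" "rr a \<beta> \<le> 1"
    "rr a \<beta> * phi powr (1 / real a) = rr a \<beta> + phi powr (\<beta> / real a) - 1"
    "phi powr (\<beta> / real a) \<ge> 1" "phi powr (\<beta> / real a) \<le> phi powr (1 / real a)"
proof -
  define q where "q = phi powr (1 / real a)"
  define bq where "bq = phi powr (\<beta> / real a)"
  have q1: "q > 1" unfolding q_def using qq_gt1[OF a] .
  have bq1: "bq \<ge> 1" unfolding bq_def by (rule ge_one_powr_ge_zero) (use phi_gt1 b0 in auto)
  have bqq: "bq \<le> q" unfolding bq_def q_def
    by (rule powr_mono) (use phi_gt1 b0 b1 a in \<open>auto simp: divide_right_mono\<close>)
  have rdef: "rr a \<beta> = (bq - 1) / (q - 1)" unfolding rr_def bq_def q_def by simp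
  show "0 \<le> rr a \<beta>" unfolding rdef using bq1 q1 by simp
  show "rr a \<beta> \<le> 1" unfolding rdef using bqq q1 by simp
  have "rr a \<beta> * (q - 1) = bq - 1" unfolding rdef using q1 by simp
  then show "rr a \<beta> * phi powr (1 / real a) = rr a \<beta> + phi powr (\<beta> / real a) - 1"
    unfolding q_def[symmetric] bq_def[symmetric] by (simp add: algebra_simps)
  show "phi powr (\<beta> / real a) \<ge> 1" using bq1 unfolding bq_def .
  show "phi powr (\<beta> / real a) \<le> phi powr (1 / real a)" using bqq unfolding bq_def q_def .
qed

lemma MT_bounds:
  assumes a: "a \<ge> 1" and b0: "0 \<le> \<beta>" and b1: "\<beta> \<le> 1" and p0: "0 \<le> p" and p1: "p \<le> 1"
  shows "rr a \<beta> \<le> MT a \<beta> p" "MT a \<beta> p \<le> rr a \<beta> * phi powr (1 / real a - \<beta> / real a)"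
proof -
  define q where "q = phi powr (1 / real a)"
  define bq where "bq = phi powr (\<beta> / real a)"
  define w where "w = phi powr (p / real a)"
  define r where "r = rr a \<beta>"
  note rf = rr_facts[OF a b0 b1]
  have r0: "0 \<le> r" and r1: "r \<le> 1" and rq: "r * q = r + bq - 1" and bq1: "bq \<ge> 1" and bqq: "bq \<le> q"
    using rf unfolding r_def q_def bq_def by auto
  have w1: "w \<ge> 1" unfolding w_def by (rule ge_one_powr_ge_zero) (use phi_gt1 p0 in auto)
  have wq: "w \<le> q" unfolding w_def q_def
    by (rule powr_mono) (use phi_gt1 p1 a in \<open>auto simp: divide_right_mono\<close>)
  have Mmax: "rr a \<beta> * phi powr (1 / real a - \<beta> / real a) = r * q / bq"
    unfolding r_def q_def bq_def by (simp add: powr_diff)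
  have rqpos: "r * q \<ge> 0" using r0 q_def phi_pos by simp
  have "r \<le> MT a \<beta> p \<and> MT a \<beta> p \<le> r * q / bq"
  proof (cases "p \<le> \<beta>")
    case True
    have wb: "w \<le> bq" unfolding w_def bq_def
      by (rule powr_mono) (use phi_gt1 True a in \<open>auto simp: divide_right_mono\<close>)
    have MTe: "MT a \<beta> p = 1 - (1 - r) / w" unfolding MT_def r_def w_def using True phi_pos
      by (simp add: min_def field_simps)
    have Me: "r * q / bq = 1 - (1 - r) / bq" unfolding rq using bq1 by (simp add: field_simps)
    have l1: "(1 - r) / w \<le> (1 - r) / 1" by (rule divide_left_mono) (use r1 w1 in auto)
    have l2: "(1 - r) / bq \<le> (1 - r) / w" by (rule divide_left_mono) (use r1 w1 wb in auto)
    show ?thesis unfolding MTe Me using l1 l2 by simp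
  next
    case False
    have bw: "bq \<le> w" unfolding w_def bq_def
      by (rule powr_mono) (use phi_gt1 False a in \<open>auto simp: divide_right_mono\<close>)
    have "MT a \<beta> p = (r + bq - 1) / w" unfolding MT_def r_def w_def bq_def using False
      by (simp add: min_def)
    then have MTe: "MT a \<beta> p = r * q / w" unfolding rq .
    have l1: "r * q / q \<le> r * q / w" by (rule divide_left_mono) (use rqpos w1 wq in auto)
    have l2: "r * q / w \<le> r * q / bq" by (rule divide_left_mono) (use rqpos bq1 bw in auto)
    have "r * q / q = r" using q_def phi_pos by simp
    then show ?thesis unfolding MTe using l1 l2 by simp
  qed
  then show "rr a \<beta> \<le> MT a \<beta> p" "MT a \<beta> p \<le> rr a \<beta> * phi powr (1 / real a - \<beta> / real a)"
    unfolding Mmax r_def by auto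
qed

lemma density:
  assumes a: "a \<ge> 1" and g0: "0 \<le> \<gamma>" and e0: "0 < \<epsilon>" and ge1: "\<gamma> + \<epsilon> \<le> 1"
  shows "\<exists>n\<ge>N. n \<ge> 1 \<and> \<gamma> \<le> pp a n \<and> pp a n < \<gamma> + \<epsilon>"
proof -
  define q where "q = phi powr (1 / real a)"
  define c' where "c' = cc powr (1 / real a)"
  define d where "d = phi powr (\<epsilon> / real a) - 1"
  have q1: "q > 1" unfolding q_def using qq_gt1[OF a] .
  have c'0: "c' > 0" unfolding c'_def using cc_pos by simp
  have d0: "d > 0" unfolding d_def using powr_less_mono[of 0 "\<epsilon> / real a" phi] phi_gt1 e0 a by simp
  define B where "B = max (real N + 1) (3 / d) + 1"
  obtain j :: nat where j: "B / (c' * (q - 1)) < real j" using reals_Archimedean2 by blast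
  define J where "J = j + 1"
  have J1: "real J \<ge> 1" unfolding J_def by simp
  have "phi powr (real J / real a) = q ^ J" unfolding q_def using phi_pos
    by (simp add: powr_power)
  then have HJ: "HH a (real J) = c' * q ^ J" unfolding HH_def c'_def by simp
  have "1 + real J * (q - 1) \<le> (1 + (q - 1)) ^ J" by (rule Bernoulli_inequality) (use q1 in simp)
  then have "q ^ J \<ge> 1 + real J * (q - 1)" by simp
  moreover have "real J * (q - 1) > B / c'"
  proof -
    have "real J > B / (c' * (q - 1))" using j unfolding J_def by simp
    then show ?thesis using q1 c'0 by (simp add: field_simps)
  qed
  ultimately have "q ^ J > B / c'" by linarith
  then have HJB: "HH a (real J) > B" unfolding HJ using c'0 by (simp add: field_simps)
  define x where "x = real J + \<gamma>"
  have x1: "x \<ge> 1" unfolding x_def using J1 g0 by simp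
  have xe1: "x + \<epsilon> \<ge> 1" using x1 e0 by simp
  have pg: "phi powr (\<gamma> / real a) \<ge> 1" by (rule ge_one_powr_ge_zero) (use phi_gt1 g0 in auto)
  have Hx: "HH a x = HH a (real J) * phi powr (\<gamma> / real a)" unfolding x_def HH_add ..
  have HxB: "HH a x > B"
  proof -
    have "HH a (real J) * 1 \<le> HH a (real J) * phi powr (\<gamma> / real a)"
      by (rule mult_left_mono) (use pg HH_pos[of a "real J"] in auto)
    then show ?thesis using HJB Hx by simp
  qed
  have Hxe: "HH a (x + \<epsilon>) = HH a x * (1 + d)" unfolding HH_add d_def by simp
  have g1: "\<bar>GG a x - HH a x\<bar> \<le> 1" by (rule GH_bound[OF a x1])
  have g2: "\<bar>GG a (x + \<epsilon>) - HH a (x + \<epsilon>)\<bar> \<le> 1" by (rule GH_bound[OF a xe1])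
  have Bd: "B * d \<ge> 3"
  proof -
    have "B \<ge> 3 / d" unfolding B_def by simp
    then show ?thesis using d0 by (simp add: field_simps)
  qed
  have "HH a x * d > B * d" using HxB d0 by simp
  moreover have Hxe': "HH a (x + \<epsilon>) = HH a x + HH a x * d" unfolding Hxe by (simp add: algebra_simps)
  ultimately have gap: "GG a (x + \<epsilon>) > GG a x + 1"
    using g1 g2 Bd unfolding Hxe' by (simp only: abs_le_iff) linarith
  define n where "n = nat \<lceil>GG a x\<rceil>"
  have Gx1: "GG a x \<ge> 1" by (rule GG_ge1[OF x1])
  have rn: "real n = of_int \<lceil>GG a x\<rceil>" unfolding n_def using Gx1 by simp
  have nge: "GG a x \<le> real n" unfolding rn by simp
  have nlt: "real n < GG a x + 1" unfolding rn by linarith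
  have n1: "n \<ge> 1" using nge Gx1 by simp
  have GxN: "GG a x > real N + 1"
  proof -
    have "B \<ge> real N + 2" unfolding B_def by simp
    then show ?thesis using HxB g1 by (simp only: abs_le_iff) linarith
  qed
  have nN: "n \<ge> N" using nge GxN by simp
  define t where "t = FFinv (real n ^ a)"
  have tx: "x \<le> t" unfolding t_def using le_T_iff[of a "real n" x] a n1 x1 nge by simp
  have txe: "t < x + \<epsilon>"
  proof (rule ccontr)
    assume "\<not> t < x + \<epsilon>"
    then have "x + \<epsilon> \<le> t" by simp
    then have "GG a (x + \<epsilon>) \<le> real n" unfolding t_def using le_T_iff[of a "real n" "x + \<epsilon>"] a n1 xe1 by simp
    then show False using gap nlt by simp
  qed
  have fl: "\<lfloor>t\<rfloor> = int J" unfolding floor_eq_iff using tx txe g0 ge1 unfolding x_def by simp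
  have "pp a n = t - real J" unfolding pp_def t_def[symmetric] frac_def fl by simp
  then show ?thesis using nN n1 tx txe unfolding x_def by (intro exI[of _ n]) simp
qed

lemma limsup_ge:
  fixes X :: "nat \<Rightarrow> ereal"
  assumes "\<And>y N. y < C \<Longrightarrow> \<exists>n\<ge>N. y < X n"
  shows "C \<le> limsup X"
proof (rule Limsup_greatest)
  fix P assume "eventually P sequentially"
  then obtain N where N: "\<forall>n\<ge>N. P n" by (auto simp: eventually_sequentially)
  show "C \<le> (SUP x\<in>Collect P. X x)"
    unfolding le_SUP_iff
  proof (intro allI impI)
    fix y assume "y < C"
    then obtain n where "n \<ge> N" "y < X n" using assms by blast
    then show "\<exists>i\<in>Collect P. y < X i" using N by auto
  qed
qed

lemma liminf_le:
  fixes X :: "nat \<Rightarrow> ereal"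
  assumes "\<And>y N. C < y \<Longrightarrow> \<exists>n\<ge>N. X n < y"
  shows "liminf X \<le> C"
proof (rule Liminf_least)
  fix P assume "eventually P sequentially"
  then obtain N where N: "\<forall>n\<ge>N. P n" by (auto simp: eventually_sequentially)
  show "(INF x\<in>Collect P. X x) \<le> C"
    unfolding INF_le_iff
  proof (intro allI impI)
    fix y assume "C < y"
    then obtain n where "n \<ge> N" "X n < y" using assms by blast
    then show "\<exists>i\<in>Collect P. X i < y" using N by auto
  qed
qed

lemma MT_delta:
  assumes a: "a \<ge> 1" and e: "e > 0"
  shows "\<exists>\<delta>>0. \<forall>p. \<bar>p - p0\<bar> < \<delta> \<longrightarrow> \<bar>MT a \<beta> p - MT a \<beta> p0\<bar> < e"
proof -
  obtain \<delta> where d: "\<delta> > 0" "\<forall>x. x \<noteq> p0 \<and> norm (x - p0) < \<delta> \<longrightarrow> norm (MT a \<beta> x - MT a \<beta> p0) < e"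
    using LIM_D[OF isContD[OF MT_cont[OF a]] e] by blast
  show ?thesis
  proof (intro exI[of _ \<delta>] conjI allI impI)
    fix p assume "\<bar>p - p0\<bar> < \<delta>"
    then show "\<bar>MT a \<beta> p - MT a \<beta> p0\<bar> < e" using d e by (cases "p = p0") auto
  qed (use d in auto)
qed

lemma err_ev:
  assumes a: "a \<ge> 1" and b0: "0 \<le> \<beta>" and b1: "\<beta> < 1" and e: "e > 0"
  shows "\<exists>N. \<forall>n\<ge>N. \<bar>Pn a \<beta> n - main_term a \<beta> n\<bar> < e"
  using LIMSEQ_D[OF err_to0[OF a b0 b1] e] by simp

lemma pp_range: "0 \<le> pp a n" "pp a n \<le> 1"
  unfolding pp_def using frac_lt_1[of "FFinv (real n ^ a)"] by auto

lemma MT_beta: assumes a: "a \<ge> 1" and b0: "0 \<le> \<beta>" and b1: "\<beta> \<le> 1"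
  shows "MT a \<beta> \<beta> = rr a \<beta> * phi powr (1 / real a - \<beta> / real a)"
proof -
  note rf = rr_facts[OF a b0 b1]
  have "MT a \<beta> \<beta> = (rr a \<beta> + phi powr (\<beta> / real a) - 1) / phi powr (\<beta> / real a)"
    unfolding MT_def by simp
  also have "\<dots> = rr a \<beta> * phi powr (1 / real a) / phi powr (\<beta> / real a)" using rf(3) by simp
  also have "\<dots> = rr a \<beta> * phi powr (1 / real a - \<beta> / real a)" by (simp add: powr_diff)
  finally show ?thesis .
qed

lemma MT_zero: assumes b0: "0 \<le> \<beta>" shows "MT a \<beta> 0 = rr a \<beta>"
  unfolding MT_def using b0 phi_pos by (simp add: min_def)

lemma limsup_part:
  assumes a: "a \<ge> 1" and b0: "0 \<le> \<beta>" and b1: "\<beta> < 1"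
  shows "limsup (\<lambda>n. ereal (Pn a \<beta> n)) = ereal (rr a \<beta> * phi powr (1 / real a - \<beta> / real a))"
proof (rule antisym)
  define L where "L = rr a \<beta> * phi powr (1 / real a - \<beta> / real a)"
  have mainle: "main_term a \<beta> n \<le> L" for n
    unfolding main_MT L_def using MT_bounds(2)[OF a b0 _ pp_range] b1 by simp
  show "limsup (\<lambda>n. ereal (Pn a \<beta> n)) \<le> ereal L"
    unfolding Limsup_le_iff
  proof (intro allI impI)
    fix y assume y: "ereal L < y"
    show "eventually (\<lambda>n. y > ereal (Pn a \<beta> n)) sequentially"
    proof (cases y)
      case (real y')
      then have "y' - L > 0" using y by simp
      from err_ev[OF a b0 b1 this] obtain N where N: "\<forall>n\<ge>N. \<bar>Pn a \<beta> n - main_term a \<beta> n\<bar> < y' - L" by blast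
      have "y > ereal (Pn a \<beta> n)" if "n \<ge> N" for n
        using N that mainle[of n] real by (simp only: abs_less_iff) auto
      then show ?thesis unfolding eventually_sequentially by blast
    next
      case PInf
      then show ?thesis by simp
    next
      case MInf
      then show ?thesis using y by simp
    qed
  qed
  show "ereal L \<le> limsup (\<lambda>n. ereal (Pn a \<beta> n))"
  proof (rule limsup_ge)
    fix y N assume y: "y < ereal L"
    show "\<exists>n\<ge>N. y < ereal (Pn a \<beta> n)"
    proof (cases y)
      case (real y')
      define e where "e = (L - y') / 2"
      have e0: "e > 0" unfolding e_def using y real by simp
      obtain \<delta> where d: "\<delta> > 0" "\<forall>p. \<bar>p - \<beta>\<bar> < \<delta> \<longrightarrow> \<bar>MT a \<beta> p - MT a \<beta> \<beta>\<bar> < e"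
        using MT_delta[OF a e0, of \<beta> \<beta>] by blast
      obtain N1 where N1: "\<forall>n\<ge>N1. \<bar>Pn a \<beta> n - main_term a \<beta> n\<bar> < e" using err_ev[OF a b0 b1 e0] by blast
      define \<epsilon> where "\<epsilon> = min (\<delta> / 2) (1 - \<beta>)"
      have eps: "\<epsilon> > 0" "\<beta> + \<epsilon> \<le> 1" "\<epsilon> < \<delta>" unfolding \<epsilon>_def using d b1 by auto
      obtain n where n: "n \<ge> max N N1" "n \<ge> 1" "\<beta> \<le> pp a n" "pp a n < \<beta> + \<epsilon>"
        using density[OF a b0 eps(1) eps(2), of "max N N1"] by blast
      have "\<bar>pp a n - \<beta>\<bar> < \<delta>" using n eps by simp
      then have "\<bar>MT a \<beta> (pp a n) - L\<bar> < e" using d MT_beta[OF a b0] b1 unfolding L_def by simp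
      moreover have "\<bar>Pn a \<beta> n - MT a \<beta> (pp a n)\<bar> < e" using N1 n unfolding main_MT by simp
      moreover have e2: "2 * e = L - y'" unfolding e_def by simp
      ultimately have "Pn a \<beta> n > y'" by (simp only: abs_less_iff) (elim conjE, linarith)
      then show ?thesis using n real by (intro exI[of _ n]) simp
    next
      case PInf
      then show ?thesis using y by simp
    next
      case MInf
      then show ?thesis by (intro exI[of _ N]) simp
    qed
  qed
qed

lemma liminf_part:
  assumes a: "a \<ge> 1" and b0: "0 \<le> \<beta>" and b1: "\<beta> < 1"
  shows "liminf (\<lambda>n. ereal (Pn a \<beta> n)) = ereal (rr a \<beta>)"
proof (rule antisym)
  define L where "L = rr a \<beta>"
  have mainge: "main_term a \<beta> n \<ge> L" for n
    unfolding main_MT L_def using MT_bounds(1)[OF a b0 _ pp_range] b1 by simp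
  show "ereal L \<le> liminf (\<lambda>n. ereal (Pn a \<beta> n))"
    unfolding le_Liminf_iff
  proof (intro allI impI)
    fix y assume y: "y < ereal L"
    show "eventually (\<lambda>n. y < ereal (Pn a \<beta> n)) sequentially"
    proof (cases y)
      case (real y')
      then have "L - y' > 0" using y by simp
      from err_ev[OF a b0 b1 this] obtain N where N: "\<forall>n\<ge>N. \<bar>Pn a \<beta> n - main_term a \<beta> n\<bar> < L - y'" by blast
      have "y < ereal (Pn a \<beta> n)" if "n \<ge> N" for n
        using N that mainge[of n] real by (simp only: abs_less_iff) auto
      then show ?thesis unfolding eventually_sequentially by blast
    next
      case PInf
      then show ?thesis using y by simp
    next
      case MInf
      then show ?thesis by simp
    qed
  qed
  show "liminf (\<lambda>n. ereal (Pn a \<beta> n)) \<le> ereal L"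
  proof (rule liminf_le)
    fix y N assume y: "ereal L < y"
    show "\<exists>n\<ge>N. ereal (Pn a \<beta> n) < y"
    proof (cases y)
      case (real y')
      define e where "e = (y' - L) / 2"
      have e0: "e > 0" unfolding e_def using y real by simp
      obtain \<delta> where d: "\<delta> > 0" "\<forall>p. \<bar>p - 0\<bar> < \<delta> \<longrightarrow> \<bar>MT a \<beta> p - MT a \<beta> 0\<bar> < e"
        using MT_delta[OF a e0, of 0 \<beta>] by blast
      obtain N1 where N1: "\<forall>n\<ge>N1. \<bar>Pn a \<beta> n - main_term a \<beta> n\<bar> < e" using err_ev[OF a b0 b1 e0] by blast
      define \<epsilon> where "\<epsilon> = min (\<delta> / 2) 1"
      have eps: "\<epsilon> > 0" "0 + \<epsilon> \<le> 1" "\<epsilon> < \<delta>" unfolding \<epsilon>_def using d by auto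
      obtain n where n: "n \<ge> max N N1" "n \<ge> 1" "0 \<le> pp a n" "pp a n < 0 + \<epsilon>"
        using density[OF a _ eps(1) eps(2), of "max N N1"] by auto
      have "\<bar>pp a n - 0\<bar> < \<delta>" using n eps by simp
      then have "\<bar>MT a \<beta> (pp a n) - L\<bar> < e" using d MT_zero[OF b0] unfolding L_def by simp
      moreover have "\<bar>Pn a \<beta> n - MT a \<beta> (pp a n)\<bar> < e" using N1 n unfolding main_MT by simp
      moreover have e2: "2 * e = y' - L" unfolding e_def by simp
      ultimately have "Pn a \<beta> n < y'" by (simp only: abs_less_iff) (elim conjE, linarith)
      then show ?thesis using n real by (intro exI[of _ n]) simp
    next
      case PInf
      then show ?thesis by (intro exI[of _ N]) simp
    next
      case MInf
      then show ?thesis using y by simp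
    qed
  qed
qed

lemma LL_le1: "LL \<le> 1"
proof -
  have "ln phi \<le> phi - 1" using phi_pos by (rule ln_le_minus_one)
  then show ?thesis unfolding LL_def using phi_lt2 by linarith
qed

lemma C_part:
  assumes a: "a \<ge> 1" and b0: "0 \<le> \<beta>" and b1: "\<beta> \<le> 1"
  shows "\<bar>rr a \<beta> * phi powr (1 / real a - \<beta> / real a) - \<beta>\<bar> \<le> 2 / real a
         \<and> \<bar>rr a \<beta> - \<beta>\<bar> \<le> 2 / real a"
proof -
  define s where "s = LL / real a"
  have s0: "s > 0" unfolding s_def using LL_pos a by simp
  have s1: "s \<le> 1 / real a" unfolding s_def using LL_le1 a by (simp add: divide_right_mono)
  have sLL: "s \<le> LL" unfolding s_def using LL_pos a by (simp add: divide_le_eq)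
  have pw: "phi powr x = exp (x * LL)" for x unfolding powr_def LL_def using phi_pos by simp
  define b where "b = exp (\<beta> * s)"
  define q where "q = exp s"
  define E where "E = exp ((1 - \<beta>) * s)"
  have bdef: "phi powr (\<beta> / real a) = b" unfolding pw b_def s_def by simp
  have qdef: "phi powr (1 / real a) = q" unfolding pw q_def s_def by simp
  have Edef: "phi powr (1 / real a - \<beta> / real a) = E"
  proof -
    have "(1 / real a - \<beta> / real a) * LL = (1 - \<beta>) * (LL / real a)" using a by (simp add: field_simps)
    then show ?thesis unfolding pw E_def s_def by simp
  qed
  define r where "r = rr a \<beta>"
  have q1: "q > 1" unfolding q_def using s0 by simp
  have rdef: "r = (b - 1) / (q - 1)" unfolding r_def rr_def bdef qdef ..
  have conv: "exp ((1 - \<beta>) *\<^sub>R 0 + \<beta> *\<^sub>R s) \<le> (1 - \<beta>) * exp 0 + \<beta> * exp s"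
    by (rule convex_onD[OF exp_convex]) (use b0 b1 in auto)
  then have i: "b - 1 \<le> \<beta> * (q - 1)" unfolding b_def q_def by (simp add: algebra_simps)
  have ii: "b - 1 \<ge> \<beta> * s" unfolding b_def using exp_ge_add_one_self[of "\<beta> * s"] by linarith
  have bm1: "b - 1 \<ge> 0" using ii b0 s0 mult_nonneg_nonneg[of \<beta> s] by linarith
  have r0: "0 \<le> r" unfolding rdef by (rule divide_nonneg_pos) (use bm1 q1 in auto)
  have iii: "q * (1 - s) \<le> 1"
  proof -
    have "1 + (- s) \<le> exp (- s)" by (rule exp_ge_add_one_self)
    then have "q * (1 - s) \<le> q * exp (- s)" using q1 by (intro mult_left_mono) auto
    also have "q * exp (- s) = 1" unfolding q_def by (simp add: exp_minus)
    finally show ?thesis .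
  qed
  have r_le: "r \<le> \<beta>" unfolding rdef using i q1 by (simp add: divide_le_eq)
  have r_ge: "r \<ge> \<beta> - s"
  proof -
    have "\<beta> * s \<le> r * (q - 1)" unfolding rdef using ii q1 by simp
    also have "\<dots> \<le> r * (s * q)"
    proof (rule mult_left_mono)
      show "q - 1 \<le> s * q" using iii by (simp add: algebra_simps)
      show "0 \<le> r" by (rule r0)
    qed
    finally have "\<beta> * s \<le> (r * q) * s" by (simp add: algebra_simps)
    then have "\<beta> \<le> r * q" using s0 by simp
    moreover have "r * q * (1 - s) \<le> r"
    proof -
      have "r * (q * (1 - s)) \<le> r * 1" using iii r0 by (intro mult_left_mono) auto
      then show ?thesis by (simp add: algebra_simps)
    qed
    ultimately have "\<beta> * (1 - s) \<le> r"
    proof -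
      assume h1: "\<beta> \<le> r * q" and h2: "r * q * (1 - s) \<le> r"
      show ?thesis
      proof (cases "s \<le> 1")
        case True
        then have "\<beta> * (1 - s) \<le> r * q * (1 - s)" using h1 by (intro mult_right_mono) auto
        then show ?thesis using h2 by linarith
      next
        case False
        then have "\<beta> * (1 - s) \<le> 0" using b0 by (simp add: mult_nonneg_nonpos)
        moreover have "0 \<le> r" by (rule r0)
        ultimately show ?thesis by linarith
      qed
    qed
    moreover have "\<beta> * s \<le> s" using b1 s0 by (simp add: mult_left_le_one_le)
    ultimately show ?thesis by (simp add: algebra_simps)
  qed
  have E1: "E \<ge> 1" unfolding E_def using b1 s0 by simp
  have Eq: "E \<le> q" unfolding E_def q_def using b0 s0 by (simp add: mult_left_le_one_le)
  have q2: "q \<le> 2"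
  proof -
    have "q \<le> exp LL" unfolding q_def using sLL by simp
    also have "exp LL = phi" unfolding LL_def using phi_pos by simp
    finally show ?thesis using phi_lt2 by simp
  qed
  have sq: "q - 1 \<le> s * q" using iii by (simp add: algebra_simps)
  have "s * q \<le> s * 2" using q2 s0 by simp
  then have q1s: "q - 1 \<le> 2 * s" using sq by linarith
  have up: "r * E \<le> \<beta> * E" using r_le E1 by (intro mult_right_mono) auto
  have "\<beta> * E - \<beta> = \<beta> * (E - 1)" by (simp add: algebra_simps)
  also have "\<dots> \<le> 1 * (E - 1)" using b1 E1 by (intro mult_right_mono) auto
  finally have up2: "\<beta> * E - \<beta> \<le> E - 1" by simp
  have lo: "r * E \<ge> r * 1" using r0 E1 by (intro mult_left_mono) auto
  have "\<bar>r * E - \<beta>\<bar> \<le> 2 * s" using up up2 lo r_ge Eq q1s s0 by (simp only: abs_le_iff) linarith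
  moreover have "\<bar>r - \<beta>\<bar> \<le> 2 * s" using r_le r_ge s0 by (simp only: abs_le_iff) linarith
  moreover have "2 * s \<le> 2 / real a" using s1 by simp
  ultimately show ?thesis unfolding r_def Edef by linarith
qed

lemma beta1:
  assumes a: "a \<ge> 1" and n: "n \<ge> 1"
  shows "Pn a 1 n = 1" "main_term a 1 n = 1" "rr a 1 = 1"
proof -
  have q1: "phi powr (1 / real a) > 1" using qq_gt1[OF a] .
  show r1: "rr a 1 = 1" unfolding rr_def using q1 by simp
  have "{k \<in> {1..n}. frac (FFinv (real k ^ a)) \<le> 1} = {1..n}"
    by (auto intro: less_imp_le[OF frac_lt_1])
  then show "Pn a 1 n = 1" unfolding Pn_def using n by simp
  have "pp a n \<le> 1" by (rule pp_range)
  then show "main_term a 1 n = 1" unfolding main_term_def r1 using phi_pos by simp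
qed

theorem theorem4p10:
  fixes \<beta> :: real
  assumes "0 \<le> \<beta>" and "\<beta> \<le> 1"
  shows "(\<forall>a::nat. a \<ge> 1 \<longrightarrow>
            (\<lambda>n. Pn a \<beta> n - main_term a \<beta> n)
               \<in> O[sequentially](\<lambda>n. mm a n * phi powr (- mm a n / real a))
          \<and> limsup (\<lambda>n. ereal (Pn a \<beta> n)) = ereal (rr a \<beta> * phi powr (1 / real a - \<beta> / real a))
          \<and> liminf (\<lambda>n. ereal (Pn a \<beta> n)) = ereal (rr a \<beta>))
       \<and> (\<exists>C. \<forall>a::nat. a \<ge> 1 \<longrightarrow>
            \<bar>rr a \<beta> * phi powr (1 / real a - \<beta> / real a) - \<beta>\<bar> \<le> C / real a
          \<and> \<bar>rr a \<beta> - \<beta>\<bar> \<le> C / real a)"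
proof (intro conjI allI impI)
  show "\<exists>C. \<forall>a::nat. a \<ge> 1 \<longrightarrow>
            \<bar>rr a \<beta> * phi powr (1 / real a - \<beta> / real a) - \<beta>\<bar> \<le> C / real a
          \<and> \<bar>rr a \<beta> - \<beta>\<bar> \<le> C / real a"
    using C_part assms by (intro exI[of _ 2]) blast
next
  fix a :: nat assume a: "a \<ge> 1"
  show "(\<lambda>n. Pn a \<beta> n - main_term a \<beta> n) \<in> O[sequentially](\<lambda>n. mm a n * phi powr (- mm a n / real a))"
  proof (cases "\<beta> = 1")
    case True
    have "eventually (\<lambda>n. norm (Pn a \<beta> n - main_term a \<beta> n)
            \<le> 0 * norm (mm a n * phi powr (- mm a n / real a))) sequentially"
      unfolding eventually_sequentially True using beta1[OF a] by (intro exI[of _ 1]) auto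
    then show ?thesis by (rule bigoI)
  next
    case False
    then have b1: "\<beta> < 1" using assms by simp
    define K where "K = 6 / cc powr (1 / real a)"
    have K0: "K \<ge> 0" unfolding K_def using cc_pos by simp
    have "norm (Pn a \<beta> n - main_term a \<beta> n) \<le> K * norm (mm a n * phi powr (- mm a n / real a))"
      if "n \<ge> 1" for n
    proof -
      have "norm (Pn a \<beta> n - main_term a \<beta> n) \<le> K * (mm a n * phi powr (- mm a n / real a))"
        using main_bound[OF a assms(1) b1 that] unfolding K_def by (simp add: mult.assoc)
      also have "\<dots> \<le> K * norm (mm a n * phi powr (- mm a n / real a))"
        by (rule mult_left_mono) (use K0 in auto)
      finally show ?thesis .
    qed
    then have "eventually (\<lambda>n. norm (Pn a \<beta> n - main_term a \<beta> n)
            \<le> K * norm (mm a n * phi powr (- mm a n / real a))) sequentially"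
      unfolding eventually_sequentially by blast
    then show ?thesis by (rule bigoI)
  qed
next
  fix a :: nat assume a: "a \<ge> 1"
  show "limsup (\<lambda>n. ereal (Pn a \<beta> n)) = ereal (rr a \<beta> * phi powr (1 / real a - \<beta> / real a))"
  proof (cases "\<beta> = 1")
    case True
    have "((\<lambda>n. ereal (Pn a \<beta> n)) \<longlongrightarrow> ereal 1) sequentially"
      unfolding True using beta1(1)[OF a] by (intro tendsto_eventually) (auto simp: eventually_sequentially)
    then have "limsup (\<lambda>n. ereal (Pn a \<beta> n)) = ereal 1"
      by (intro lim_imp_Limsup) auto
    then show ?thesis unfolding True using beta1(3)[OF a, of 1] phi_pos by simp
  next
    case False
    then show ?thesis using limsup_part[OF a assms(1)] assms(2) by simp
  qed
next
  fix a :: nat assume a: "a \<ge> 1"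
  show "liminf (\<lambda>n. ereal (Pn a \<beta> n)) = ereal (rr a \<beta>)"
  proof (cases "\<beta> = 1")
    case True
    have "((\<lambda>n. ereal (Pn a \<beta> n)) \<longlongrightarrow> ereal 1) sequentially"
      unfolding True using beta1(1)[OF a] by (intro tendsto_eventually) (auto simp: eventually_sequentially)
    then have "liminf (\<lambda>n. ereal (Pn a \<beta> n)) = ereal 1"
      by (intro lim_imp_Liminf) auto
    then show ?thesis unfolding True using beta1(3)[OF a, of 1] phi_pos by simp
  next
    case False
    then show ?thesis using liminf_part[OF a assms(1)] assms(2) by simp
  qed
qed


end
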